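(* Let $H, W \ge 1$ be integers and $L=HW$. For each $s \in \{0,1,\dots,H+W-2\}$ let $i_{\min}(s)=\max(0,\,s-(W-1))$ and $i_{\max}(s)=\min(s,\,H-1)$. Let $\mathbf{d}^{(s)}$ be the ordered list of points $(i,\,s-i)$ and $\mathbf{a}^{(s)}$ the ordered list of points $(i,\,W-1-(s-i))$, in both cases for $i=i_{\min}(s),\dots,i_{\max}(s)$ in increasing order. Set $\operatorname{diag}(s)=\mathbf{d}^{(s)}$, $\operatorname{antidiag}(s)=\mathbf{a}^{(s)}$ for $s$ even and $\operatorname{diag}(s)=\operatorname{reverse}(\mathbf{d}^{(s)})$, $\operatorname{antidiag}(s)=\operatorname{reverse}(\mathbf{a}^{(s)})$ for $s$ odd. Let $\mathbf{p}_{\text{diag}}$ (resp. $\mathbf{p}_{\text{antidiag}}$) be the concatenation of $\operatorname{diag}(s)$ (resp. $\operatorname{antidiag}(s)$) over $s=0,1,\dots,H+W-2$. Then for each of the four point sequences $\mathbf{p}_{\text{diag}}$, $\mathbf{p}_{\text{antidiag}}$, $\operatorname{reverse}(\mathbf{p}_{\text{diag}})$, $\operatorname{reverse}(\mathbf{p}_{\text{antidiag}})$, any two consecutive points $\mathbf{p},\mathbf{q}$ satisfy $\|\mathbf{q}-\mathbf{p}\|_2 \le \sqrt{2}$.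
   Context: The grid is $\{0,\dots,H-1\}\times\{0,\dots,W-1\}$ with points $(i,j)$. $\operatorname{reverse}$ reverses a finite list; $\|\cdot\|_2$ is the Euclidean norm. These four sequences (flattened to raster indices $iW+j$) form the four rows of the TopoA-Scan forward index tensor. *)

theory Defs
  imports "HOL-Analysis.Analysis"
begin

text \<open>Grid points are pairs (i,j) of integers. For the distance we embed them into
  real \<times> real, whose norm is the Euclidean norm sqrt((x)^2 + (y)^2).\<close>

definition imin :: "int \<Rightarrow> int \<Rightarrow> int \<Rightarrow> int" where
  "imin H W s = max 0 (s - (W - 1))"

definition imax :: "int \<Rightarrow> int \<Rightarrow> int \<Rightarrow> int" where
  "imax H W s = min s (H - 1)"

definition dlist :: "int \<Rightarrow> int \<Rightarrow> int \<Rightarrow> (int \<times> int) list" where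
  "dlist H W s = map (\<lambda>i. (i, s - i)) [imin H W s..imax H W s]"

definition alist :: "int \<Rightarrow> int \<Rightarrow> int \<Rightarrow> (int \<times> int) list" where
  "alist H W s = map (\<lambda>i. (i, W - 1 - (s - i))) [imin H W s..imax H W s]"

definition diag :: "int \<Rightarrow> int \<Rightarrow> int \<Rightarrow> (int \<times> int) list" where
  "diag H W s = (if even s then dlist H W s else rev (dlist H W s))"

definition antidiag :: "int \<Rightarrow> int \<Rightarrow> int \<Rightarrow> (int \<times> int) list" where
  "antidiag H W s = (if even s then alist H W s else rev (alist H W s))"

definition p_diag :: "int \<Rightarrow> int \<Rightarrow> (int \<times> int) list" where
  "p_diag H W = concat (map (diag H W) [0..H + W - 2])"

definition p_antidiag :: "int \<Rightarrow> int \<Rightarrow> (int \<times> int) list" where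
  "p_antidiag H W = concat (map (antidiag H W) [0..H + W - 2])"

definition to_real_pt :: "int \<times> int \<Rightarrow> real \<times> real" where
  "to_real_pt p = (real_of_int (fst p), real_of_int (snd p))"

end

theory Submission
  imports Defs
begin

definition adj :: "int \<times> int \<Rightarrow> int \<times> int \<Rightarrow> bool" where
  "adj p q = (\<bar>fst q - fst p\<bar> \<le> 1 \<and> \<bar>snd q - snd p\<bar> \<le> 1)"

lemma adj_sym: "adj p q = adj q p"
  unfolding adj_def by auto

lemma adj_swap: "(\<lambda>x y. adj y x) = adj"
  by (intro ext) (simp add: adj_def abs_minus_commute)

lemma succ_rev_adj: "successively adj (rev xs) = successively adj xs"
  unfolding successively_rev adj_swap ..

lemma adj_norm:
  assumes "adj p q"
  shows "norm (to_real_pt q - to_real_pt p) \<le> sqrt 2"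
proof -
  define a where "a = fst q - fst p"
  define b where "b = snd q - snd p"
  have a: "\<bar>a\<bar> \<le> 1" and b: "\<bar>b\<bar> \<le> 1" using assms by (auto simp: adj_def a_def b_def)
  have "(real_of_int a)^2 \<le> 1"
    using a by (metis abs_le_square_iff abs_one of_int_1 of_int_abs of_int_le_iff one_power2)
  moreover have "(real_of_int b)^2 \<le> 1"
    using b by (metis abs_le_square_iff abs_one of_int_1 of_int_abs of_int_le_iff one_power2)
  ultimately have "(real_of_int a)^2 + (real_of_int b)^2 \<le> 2" by simp
  moreover have "to_real_pt q - to_real_pt p = (real_of_int a, real_of_int b)"
    by (simp add: to_real_pt_def a_def b_def)
  ultimately show ?thesis
    by (simp add: norm_Pair)
qed

lemma succ_upto: "successively (\<lambda>x y. y = x + 1) [a..(b::int)]"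
  unfolding successively_conv_nth
proof (intro allI impI)
  fix i assume "Suc i < length [a..b]"
  then show "[a..b] ! Suc i = [a..b] ! i + 1" by simp
qed

lemma hd_upto: "a \<le> b \<Longrightarrow> hd [a..(b::int)] = a"
  by (simp add: upto_rec1)

lemma last_upto: "a \<le> b \<Longrightarrow> last [a..(b::int)] = b"
  by (simp add: upto_rec2)

lemma chain_concat:
  assumes ne: "\<And>s. 0 \<le> s \<Longrightarrow> s \<le> n \<Longrightarrow> g s \<noteq> [] \<and> successively R (g s)"
    and tr: "\<And>s. 0 \<le> s \<Longrightarrow> s < n \<Longrightarrow> R (last (g s)) (hd (g (s+1)))"
  shows "int N \<le> n \<Longrightarrow> concat (map g [0..int N]) \<noteq> [] \<and>
     last (concat (map g [0..int N])) = last (g (int N)) \<and>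
     successively R (concat (map g [0..int N]))"
proof (induction N)
  case 0
  then show ?case using ne[of 0] by simp
next
  case (Suc N)
  have e: "[0..int (Suc N)] = [0..int N] @ [int N + 1]"
    using upto_rec2[of 0 "int (Suc N)"] by simp
  have IH: "concat (map g [0..int N]) \<noteq> [] \<and>
     last (concat (map g [0..int N])) = last (g (int N)) \<and>
     successively R (concat (map g [0..int N]))" using Suc by simp
  have g1: "g (int N + 1) \<noteq> [] \<and> successively R (g (int N + 1))"
    using ne[of "int N + 1"] Suc.prems by simp
  have t: "R (last (g (int N))) (hd (g (int N + 1)))" using tr[of "int N"] Suc.prems by simp
  show ?case unfolding e using IH g1 t
    by (simp add: successively_append_iff last_append add.commute)
qed

lemma imin_le_imax: "H \<ge> 1 \<Longrightarrow> W \<ge> 1 \<Longrightarrow> 0 \<le> s \<Longrightarrow> s \<le> H + W - 2 \<Longrightarrow> imin H W s \<le> imax H W s"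
  by (simp add: imin_def imax_def)

lemma diag_props:
  assumes "H \<ge> 1" "W \<ge> 1" "0 \<le> s" "s \<le> H + W - 2"
  shows "diag H W s \<noteq> [] \<and> successively adj (diag H W s)"
proof -
  have le: "imin H W s \<le> imax H W s" using imin_le_imax assms by blast
  have "successively adj (dlist H W s)"
    unfolding dlist_def successively_map
    by (rule successively_mono[OF succ_upto]) (auto simp: adj_def)
  then show ?thesis using le
    by (auto simp del: successively_rev simp add: diag_def dlist_def succ_rev_adj)
qed

lemma antidiag_props:
  assumes "H \<ge> 1" "W \<ge> 1" "0 \<le> s" "s \<le> H + W - 2"
  shows "antidiag H W s \<noteq> [] \<and> successively adj (antidiag H W s)"
proof -
  have le: "imin H W s \<le> imax H W s" using imin_le_imax assms by blast
  have "successively adj (alist H W s)"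
    unfolding alist_def successively_map
    by (rule successively_mono[OF succ_upto]) (auto simp: adj_def)
  then show ?thesis using le
    by (auto simp del: successively_rev simp add: antidiag_def alist_def succ_rev_adj)
qed

lemma dl_ends:
  assumes "imin H W s \<le> imax H W s"
  shows "hd (dlist H W s) = (imin H W s, s - imin H W s)"
    "last (dlist H W s) = (imax H W s, s - imax H W s)"
    "hd (alist H W s) = (imin H W s, W - 1 - (s - imin H W s))"
    "last (alist H W s) = (imax H W s, W - 1 - (s - imax H W s))"
  using assms by (simp_all add: dlist_def alist_def hd_map last_map hd_upto last_upto)

lemma diag_trans:
  assumes "H \<ge> 1" "W \<ge> 1" "0 \<le> s" "s < H + W - 2"
  shows "adj (last (diag H W s)) (hd (diag H W (s+1)))"
proof -
  have le: "imin H W s \<le> imax H W s" "imin H W (s+1) \<le> imax H W (s+1)"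
    using imin_le_imax assms by auto
  note e = dl_ends[OF le(1)] dl_ends[OF le(2)]
  have ne: "dlist H W s \<noteq> []" "dlist H W (s+1) \<noteq> []" using le by (simp_all add: dlist_def)
  show ?thesis
  proof (cases "even s")
    case True
    then have "last (diag H W s) = (imax H W s, s - imax H W s)"
      "hd (diag H W (s+1)) = (imax H W (s+1), s + 1 - imax H W (s+1))"
      using e ne by (simp_all add: diag_def hd_rev)
    then show ?thesis unfolding adj_def imax_def by (simp add: min_def abs_if)
  next
    case False
    then have "last (diag H W s) = (imin H W s, s - imin H W s)"
      "hd (diag H W (s+1)) = (imin H W (s+1), s + 1 - imin H W (s+1))"
      using e ne by (simp_all add: diag_def last_rev)
    then show ?thesis unfolding adj_def imin_def by (simp add: max_def abs_if)
  qed
qed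

lemma antidiag_trans:
  assumes "H \<ge> 1" "W \<ge> 1" "0 \<le> s" "s < H + W - 2"
  shows "adj (last (antidiag H W s)) (hd (antidiag H W (s+1)))"
proof -
  have le: "imin H W s \<le> imax H W s" "imin H W (s+1) \<le> imax H W (s+1)"
    using imin_le_imax assms by auto
  note e = dl_ends[OF le(1)] dl_ends[OF le(2)]
  have ne: "alist H W s \<noteq> []" "alist H W (s+1) \<noteq> []" using le by (simp_all add: alist_def)
  show ?thesis
  proof (cases "even s")
    case True
    then have "last (antidiag H W s) = (imax H W s, W - 1 - (s - imax H W s))"
      "hd (antidiag H W (s+1)) = (imax H W (s+1), W - 1 - (s + 1 - imax H W (s+1)))"
      using e ne by (simp_all add: antidiag_def hd_rev)
    then show ?thesis unfolding adj_def imax_def by (simp add: min_def abs_if)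
  next
    case False
    then have "last (antidiag H W s) = (imin H W s, W - 1 - (s - imin H W s))"
      "hd (antidiag H W (s+1)) = (imin H W (s+1), W - 1 - (s + 1 - imin H W (s+1)))"
      using e ne by (simp_all add: antidiag_def last_rev)
    then show ?thesis unfolding adj_def imin_def by (simp add: max_def abs_if)
  qed
qed

lemma pd: assumes "H \<ge> 1" "W \<ge> 1" shows "successively adj (p_diag H W)"
proof -
  have n: "int (nat (H + W - 2)) = H + W - 2" using assms by simp
  show ?thesis
    using chain_concat[of "H + W - 2" "diag H W" adj "nat (H + W - 2)"]
      diag_props[OF assms] diag_trans[OF assms] unfolding p_diag_def n by auto
qed

lemma pa: assumes "H \<ge> 1" "W \<ge> 1" shows "successively adj (p_antidiag H W)"
proof -
  have n: "int (nat (H + W - 2)) = H + W - 2" using assms by simp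
  show ?thesis
    using chain_concat[of "H + W - 2" "antidiag H W" adj "nat (H + W - 2)"]
      antidiag_props[OF assms] antidiag_trans[OF assms] unfolding p_antidiag_def n by auto
qed

theorem mainTheorem2:
  fixes H W :: int
  assumes "H \<ge> 1" and "W \<ge> 1"
  shows "\<forall>ps \<in> {p_diag H W, p_antidiag H W, rev (p_diag H W), rev (p_antidiag H W)}.
           \<forall>k. k + 1 < length ps \<longrightarrow>
             norm (to_real_pt (ps ! (k + 1)) - to_real_pt (ps ! k)) \<le> sqrt 2"
proof (intro ballI allI impI)
  have sw: "(\<lambda>x y. adj y x) = adj" by (intro ext) (simp add: adj_def abs_minus_commute)
  have a: "successively adj (p_diag H W)" "successively adj (p_antidiag H W)"
    using pd[OF assms] pa[OF assms] by auto
  have b: "successively adj (rev (p_diag H W))" "successively adj (rev (p_antidiag H W))"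
    using a unfolding successively_rev sw by auto
  fix ps k
  assume ps: "ps \<in> {p_diag H W, p_antidiag H W, rev (p_diag H W), rev (p_antidiag H W)}"
    and k: "k + 1 < length ps"
  have "successively adj ps" using ps a b by blast
  then have "adj (ps ! k) (ps ! Suc k)" using successively_nth k by simp
  then show "norm (to_real_pt (ps ! (k + 1)) - to_real_pt (ps ! k)) \<le> sqrt 2"
    using adj_norm by simp
qed

end
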